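(* For each $a\in\{1,\dots,n\}$, the anticommutator $\{\psi_a,\psi_a^*\}=\psi_a\psi_a^*+\psi_a^*\psi_a$ belongs to the center of $\mathrm{Cl}_q(n,k)$ and satisfies $\{\psi_a,\psi_a^*\}^2=1$.
   Context: Let $\mathbb{k}$ be a field of characteristic different from $2$, let $q\in\mathbb{k}^\times$, and let $n,k$ be positive integers. The quantum Clifford algebra $\mathrm{Cl}_q(n,k)$ is the unital associative $\mathbb{k}$-algebra generated by $\psi_a,\psi_a^*,\omega_a,\omega_a^{-1}$ for $a\in\{1,\dots,n\}$, subject to the relations (for all $a,b\in\{1,\dots,n\}$): $\omega_a\omega_b=\omega_b\omega_a$; $\omega_a\omega_a^{-1}=1$; $\omega_a\psi_b=q^{\delta_{ab}}\psi_b\omega_a$; $\omega_a\psi_b^*=q^{-\delta_{ab}}\psi_b^*\omega_a$; $\psi_a\psi_b+\psi_b\psi_a=0$; $\psi_a^*\psi_b^*+\psi_b^*\psi_a^*=0$; $\psi_a\psi_a^*+q^k\psi_a^*\psi_a=\omega_a^{-k}$; $\psi_a\psi_a^*+q^{-k}\psi_a^*\psi_a=\omega_a^{k}$; and $\psi_a\psi_b^*+\psi_b^*\psi_a=0$ if $a\neq b$. *)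

theory Defs
  imports Main
begin

text \<open>A (unital associative) algebra over a field \<open>'k\<close> is modelled as a ring \<open>'a\<close>
  together with a unital ring homomorphism \<open>sc :: 'k \<Rightarrow> 'a\<close> whose image is central
  (the structure map).\<close>
definition is_k_algebra :: "('k::field \<Rightarrow> 'a::ring_1) \<Rightarrow> bool" where
  "is_k_algebra sc \<longleftrightarrow>
     sc 1 = 1 \<and> (\<forall>x y. sc (x + y) = sc x + sc y) \<and> (\<forall>x y. sc (x * y) = sc x * sc y)
     \<and> (\<forall>x z. sc x * z = z * sc x)"

inductive_set gen_subalg :: "('k \<Rightarrow> 'a::ring_1) \<Rightarrow> 'a set \<Rightarrow> 'a set"
  for sc :: "'k \<Rightarrow> 'a" and S :: "'a set" where
  gen_sc: "sc c \<in> gen_subalg sc S"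
| gen_base: "x \<in> S \<Longrightarrow> x \<in> gen_subalg sc S"
| gen_add: "x \<in> gen_subalg sc S \<Longrightarrow> y \<in> gen_subalg sc S \<Longrightarrow> x + y \<in> gen_subalg sc S"
| gen_mult: "x \<in> gen_subalg sc S \<Longrightarrow> y \<in> gen_subalg sc S \<Longrightarrow> x * y \<in> gen_subalg sc S"

text \<open>The defining relations of \<open>Cl_q(n,k)\<close>, for elements
  \<open>psi a, psis a (= psi_a^*), om a (= omega_a), omi a (= omega_a^{-1})\<close>, \<open>a \<in> {1..n}\<close>.\<close>
definition qcl_relations ::
  "('k::field \<Rightarrow> 'a::ring_1) \<Rightarrow> 'k \<Rightarrow> nat \<Rightarrow> nat \<Rightarrow>
   (nat \<Rightarrow> 'a) \<Rightarrow> (nat \<Rightarrow> 'a) \<Rightarrow> (nat \<Rightarrow> 'a) \<Rightarrow> (nat \<Rightarrow> 'a) \<Rightarrow> bool" where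
  "qcl_relations sc q n k psi psis om omi \<longleftrightarrow>
    (\<forall>a\<in>{1..n}. \<forall>b\<in>{1..n}.
       om a * om b = om b * om a
     \<and> om a * omi a = 1
     \<and> om a * psi b = sc (if a = b then q else 1) * psi b * om a
     \<and> om a * psis b = sc (if a = b then inverse q else 1) * psis b * om a
     \<and> psi a * psi b + psi b * psi a = 0
     \<and> psis a * psis b + psis b * psis a = 0
     \<and> psi a * psis a + sc (q ^ k) * psis a * psi a = omi a ^ k
     \<and> psi a * psis a + sc (inverse q ^ k) * psis a * psi a = om a ^ k
     \<and> (a \<noteq> b \<longrightarrow> psi a * psis b + psis b * psi a = 0))"

text \<open>Every such algebra is a quotient of \<open>Cl_q(n,k)\<close>, and
  \<open>Cl_q(n,k)\<close> itself is one of them.\<close>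
definition is_qcl_quotient ::
  "('k::field \<Rightarrow> 'a::ring_1) \<Rightarrow> 'k \<Rightarrow> nat \<Rightarrow> nat \<Rightarrow>
   (nat \<Rightarrow> 'a) \<Rightarrow> (nat \<Rightarrow> 'a) \<Rightarrow> (nat \<Rightarrow> 'a) \<Rightarrow> (nat \<Rightarrow> 'a) \<Rightarrow> bool" where
  "is_qcl_quotient sc q n k psi psis om omi \<longleftrightarrow>
     is_k_algebra sc \<and> qcl_relations sc q n k psi psis om omi
     \<and> gen_subalg sc (psi ` {1..n} \<union> psis ` {1..n} \<union> om ` {1..n} \<union> omi ` {1..n}) = UNIV"

end

theory Submission
  imports Defs
begin

lemma sq_zero_aux:
  fixes sc :: "'k::field \<Rightarrow> 'a::ring_1"
  assumes alg: "is_k_algebra sc" and two: "(2::'k) \<noteq> 0" and h: "x * x + x * x = (0::'a)"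
  shows "x * x = 0"
proof -
  have s1: "sc 1 = 1" and sadd: "\<And>u v. sc (u + v) = sc u + sc v"
    and smul: "\<And>u v. sc (u * v) = sc u * sc v" using alg unfolding is_k_algebra_def by blast+
  have t: "(2::'k) = 1 + 1" by simp
  have "sc 2 = sc 1 + sc 1" unfolding t by (rule sadd)
  also have "\<dots> = (2::'a)" by (simp only: s1 one_add_one)
  finally have s2: "sc 2 = (2::'a)" .
  have "sc (inverse 2) * sc 2 = sc (inverse 2 * 2)" by (simp only: smul)
  also have "\<dots> = sc 1" using two by simp
  finally have i2: "sc (inverse 2) * 2 = (1::'a)" by (simp only: s1 s2)
  have "x * x = (sc (inverse 2) * 2) * (x * x)" by (simp only: i2 mult_1_left)
  also have "\<dots> = sc (inverse 2) * (x * x + x * x)" by (simp only: mult.assoc mult_2)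
  also have "\<dots> = 0" by (simp only: h mult_zero_right)
  finally show ?thesis .
qed

lemma pow_inv_aux:
  fixes w wi :: "'a::ring_1"
  assumes "w * wi = 1"
  shows "w ^ m * wi ^ m = 1"
proof (induction m)
  case 0 then show ?case by simp
next
  case (Suc m)
  have "w ^ Suc m * wi ^ Suc m = (w ^ m * w) * (wi * wi ^ m)"
    by (metis power_Suc power_Suc2)
  also have "\<dots> = w ^ m * (w * wi) * wi ^ m" by (simp only: mult.assoc)
  also have "\<dots> = 1" using Suc assms by simp
  finally show ?case .
qed

lemma local_aux:
  fixes p s w wi c ci :: "'a::ring_1"
  assumes cc: "\<And>z. c * z = z * c" and cci: "\<And>z. ci * z = z * ci" and cinv: "ci * c = 1"
    and pp: "p * p = 0" and ss: "s * s = 0" and wwi: "w * wi = 1"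
    and r1: "p * s + c * s * p = wi ^ k" and r2: "p * s + ci * s * p = w ^ k"
    and k: "k \<ge> 1"
  shows "wi * w = 1" and "(p * s + s * p) ^ 2 = 1"
proof -
  have AB: "(p * s) * (s * p) = 0" by (simp add: mult.assoc ss flip: mult.assoc[of s s p])
  have BA: "(s * p) * (p * s) = 0"
    by (metis mult.assoc mult_zero_left mult_zero_right pp)
  have gen: "\<And>d di. (\<And>z. d * z = z * d) \<Longrightarrow> di * d = 1 \<Longrightarrow>
      (p * s + di * s * p) * (p * s + d * s * p) = (p*s)*(p*s) + (s*p)*(s*p)"
  proof -
    fix d di :: 'a
    assume dc: "\<And>z. d * z = z * d" and dd: "di * d = 1"
    have t1: "(p*s)*(d*(s*p)) = 0" by (metis dc mult.assoc AB mult_zero_right)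
    have t2: "di*(s*p)*(p*s) = 0" by (metis BA mult.assoc mult_zero_right)
    have t3: "di*(s*p)*(d*(s*p)) = (s*p)*(s*p)" by (metis dc mult.assoc dd mult_1_left)
    show "(p * s + di * s * p) * (p * s + d * s * p) = (p*s)*(p*s) + (s*p)*(s*p)"
      by (simp only: mult.assoc[of di s p] mult.assoc[of d s p] distrib_left distrib_right t1 t2 t3)
         simp
  qed
  have cic: "c * ci = 1" using cinv cc by metis
  have e1: "(p * s + ci * s * p) * (p * s + c * s * p) = (p*s)*(p*s) + (s*p)*(s*p)"
    using gen[OF cc cinv] .
  have e2: "(p * s + c * s * p) * (p * s + ci * s * p) = (p*s)*(p*s) + (s*p)*(s*p)"
    using gen[OF cci cic] .
  have XY: "w ^ k * wi ^ k = 1" using pow_inv_aux[OF wwi] .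
  hence sq: "(p*s)*(p*s) + (s*p)*(s*p) = 1" using e1 r1 r2 by simp
  hence YX: "wi ^ k * w ^ k = 1" using e2 r1 r2 by simp
  obtain m where km: "k = Suc m" using k by (cases k) auto
  define L where "L = wi ^ k * w ^ m"
  have "L * w = wi ^ k * (w ^ m * w)" unfolding L_def by (simp only: mult.assoc)
  also have "\<dots> = wi ^ k * w ^ k" using km by (simp only: power_Suc2)
  finally have Lw: "L * w = 1" using YX by simp
  have "L = L * (w * wi)" using wwi by simp
  also have "\<dots> = (L * w) * wi" by (simp only: mult.assoc)
  also have "\<dots> = wi" using Lw by simp
  finally show "wi * w = 1" using Lw by simp
  have "(p * s + s * p) ^ 2 = (p*s)*(p*s) + (p*s)*(s*p) + ((s*p)*(p*s) + (s*p)*(s*p))"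
    by (simp add: power2_eq_square distrib_left distrib_right add_ac)
  then show "(p * s + s * p) ^ 2 = 1"
    using sq AB BA by (simp add: add_ac)
qed

lemma anti_aux:
  fixes p s x :: "'a::ring_1"
  assumes "p * x + x * p = 0" and "s * x + x * s = 0"
  shows "(p * s + s * p) * x = x * (p * s + s * p)"
proof -
  have px: "p * x = - (x * p)" and sx: "s * x = - (x * s)" using assms
    by (simp_all add: eq_neg_iff_add_eq_0)
  have "(p * s) * x = p * (s * x)" by (simp only: mult.assoc)
  also have "\<dots> = - ((p * x) * s)" by (simp only: sx mult_minus_right mult.assoc)
  also have "\<dots> = x * (p * s)" by (simp only: px mult_minus_left minus_minus mult.assoc)
  finally have 1: "(p * s) * x = x * (p * s)" .
  have "(s * p) * x = s * (p * x)" by (simp only: mult.assoc)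
  also have "\<dots> = - ((s * x) * p)" by (simp only: px mult_minus_right mult.assoc)
  also have "\<dots> = x * (s * p)" by (simp only: sx mult_minus_left minus_minus mult.assoc)
  finally have 2: "(s * p) * x = x * (s * p)" .
  show ?thesis by (simp only: distrib_left distrib_right 1 2)
qed

lemma om_aux:
  fixes p s w c1 c2 :: "'a::ring_1"
  assumes c1c: "\<And>z. c1 * z = z * c1" and c2c: "\<And>z. c2 * z = z * c2" and c12: "c1 * c2 = 1"
    and wp: "w * p = c1 * p * w" and ws: "w * s = c2 * s * w"
  shows "w * (p * s + s * p) = (p * s + s * p) * w"
proof -
  have "w * (p * s) = c1 * p * (w * s)" by (simp add: wp flip: mult.assoc)
  also have "\<dots> = (c1 * c2) * (p * s * w)" using ws c2c by (metis mult.assoc)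
  finally have 1: "w * (p * s) = p * s * w" using c12 by simp
  have "w * (s * p) = c2 * s * (w * p)" by (simp add: ws flip: mult.assoc)
  also have "\<dots> = (c1 * c2) * (s * p * w)" using wp c1c c12 by (metis mult.assoc)
  finally have 2: "w * (s * p) = s * p * w" using c12 by simp
  show ?thesis by (simp add: distrib_left distrib_right 1 2)
qed

lemma inv_comm_aux:
  fixes w wi C :: "'a::ring_1"
  assumes "w * C = C * w" and "w * wi = 1" and "wi * w = 1"
  shows "wi * C = C * wi"
proof -
  have "wi * C = wi * C * (w * wi)" using assms by simp
  also have "\<dots> = wi * (w * C) * wi" using assms(1) by (simp add: mult.assoc)
  also have "\<dots> = C * wi" using assms(3) by (simp flip: mult.assoc)
  finally show ?thesis .
qed

theorem lemma3p7:
  fixes sc :: "'k::field \<Rightarrow> 'a::ring_1"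
    and q :: 'k and n k :: nat
    and psi psis om omi :: "nat \<Rightarrow> 'a"
  assumes "(2::'k) \<noteq> 0"
    and "q \<noteq> 0"
    and "n \<ge> 1" and "k \<ge> 1"
    and "is_qcl_quotient sc q n k psi psis om omi"
    and "a \<in> {1..n}"
  shows "(\<forall>x. (psi a * psis a + psis a * psi a) * x = x * (psi a * psis a + psis a * psi a))
       \<and> (psi a * psis a + psis a * psi a) ^ 2 = 1"
proof -
  have alg: "is_k_algebra sc" and rel: "qcl_relations sc q n k psi psis om omi"
    and gen: "gen_subalg sc (psi ` {1..n} \<union> psis ` {1..n} \<union> om ` {1..n} \<union> omi ` {1..n}) = UNIV"
    using assms(5) unfolding is_qcl_quotient_def by blast+
  have s1: "sc 1 = 1" and smul: "\<And>u v. sc (u * v) = sc u * sc v"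
    and scc: "\<And>x z. sc x * z = z * sc x" using alg unfolding is_k_algebra_def by blast+
  note R = rel[unfolded qcl_relations_def, rule_format]
  note R1 = R[THEN conjunct1]
  note R2 = R[THEN conjunct2, THEN conjunct1]
  note R3 = R[THEN conjunct2, THEN conjunct2, THEN conjunct1]
  note R4 = R[THEN conjunct2, THEN conjunct2, THEN conjunct2, THEN conjunct1]
  note R5 = R[THEN conjunct2, THEN conjunct2, THEN conjunct2, THEN conjunct2, THEN conjunct1]
  note R6 = R[THEN conjunct2, THEN conjunct2, THEN conjunct2, THEN conjunct2, THEN conjunct2, THEN conjunct1]
  note R7 = R[THEN conjunct2, THEN conjunct2, THEN conjunct2, THEN conjunct2, THEN conjunct2, THEN conjunct2, THEN conjunct1]
  note R8 = R[THEN conjunct2, THEN conjunct2, THEN conjunct2, THEN conjunct2, THEN conjunct2, THEN conjunct2, THEN conjunct2, THEN conjunct1]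
  note R9 = R[THEN conjunct2, THEN conjunct2, THEN conjunct2, THEN conjunct2, THEN conjunct2, THEN conjunct2, THEN conjunct2, THEN conjunct2]
  have scinv: "sc (inverse q ^ k) * sc (q ^ k) = 1"
  proof -
    have "inverse q ^ k * q ^ k = (inverse q * q) ^ k" by (rule power_mult_distrib[symmetric])
    also have "\<dots> = 1" using assms(2) by simp
    finally show ?thesis by (simp only: smul[symmetric] s1)
  qed
  have pp: "psi b * psi b = 0" if "b \<in> {1..n}" for b
    by (rule sq_zero_aux[OF alg assms(1) R5[OF that that]])
  have ss: "psis b * psis b = 0" if "b \<in> {1..n}" for b
    by (rule sq_zero_aux[OF alg assms(1) R6[OF that that]])
  have loc: "omi b * om b = 1 \<and> (psi b * psis b + psis b * psi b) ^ 2 = 1" if b: "b \<in> {1..n}" for b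
    using local_aux[of "sc (q ^ k)" "sc (inverse q ^ k)" "psi b" "psis b" "om b" "omi b" k,
        OF scc scc scinv pp[OF b] ss[OF b] R2[OF b b] R7[OF b b] R8[OF b b] assms(4)] by (rule conjI)
  define C where "C = psi a * psis a + psis a * psi a"
  have cen: "C * x = x * C" if "x \<in> gen_subalg sc (psi ` {1..n} \<union> psis ` {1..n} \<union> om ` {1..n} \<union> omi ` {1..n})" for x
    using that
  proof (induction rule: gen_subalg.induct)
    case (gen_sc c)
    then show ?case using scc by metis
  next
    case (gen_add x y)
    then show ?case by (simp add: distrib_left distrib_right)
  next
    case (gen_mult x y)
    have "C * (x * y) = (C * x) * y" by (simp only: mult.assoc)
    also have "\<dots> = x * (C * y)" using gen_mult.IH(1) by (simp only: mult.assoc)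
    also have "\<dots> = (x * y) * C" using gen_mult.IH(2) by (simp only: mult.assoc)
    finally show ?case .
  next
    case (gen_base x)
    have Cw: "om b * C = C * om b" if b: "b \<in> {1..n}" for b
    proof -
      have c12: "sc (if a = b then q else 1) * sc (if a = b then inverse q else 1) = 1"
        using assms(2) by (simp add: smul[symmetric] s1)
      show ?thesis unfolding C_def
        by (rule om_aux[OF scc scc c12]) (use R3[OF b assms(6)] R4[OF b assms(6)] in auto)
    qed
    from gen_base consider
      (p) b where "b \<in> {1..n}" "x = psi b" | (s) b where "b \<in> {1..n}" "x = psis b"
      | (w) b where "b \<in> {1..n}" "x = om b" | (wi) b where "b \<in> {1..n}" "x = omi b" by blast
    then show ?case
    proof cases
      case (p b)
      show ?thesis
      proof (cases "b = a")
        case True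
        have "C * x = psi a * psis a * psi a" unfolding C_def True p(2)
          using pp[OF assms(6)] by (simp add: distrib_right mult.assoc)
        moreover have "x * C = psi a * psis a * psi a" unfolding C_def True p(2)
          using pp[OF assms(6)] by (simp add: distrib_left flip: mult.assoc)
        ultimately show ?thesis by simp
      next
        case False
        show ?thesis unfolding C_def p(2)
          proof (rule anti_aux)
          show "psi a * psi b + psi b * psi a = 0" using R5[OF assms(6) p(1)] .
          have "psi b * psis a + psis a * psi b = 0" using R9[OF p(1) assms(6)] False by blast
          then show "psis a * psi b + psi b * psis a = 0" by (simp only: add.commute)
        qed
      qed
    next
      case (s b)
      show ?thesis
      proof (cases "b = a")
        case True
        have "C * x = psis a * psi a * psis a" unfolding C_def True s(2)
          using ss[OF assms(6)] by (simp add: distrib_right mult.assoc)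
        moreover have "x * C = psis a * psi a * psis a" unfolding C_def True s(2)
          using ss[OF assms(6)] by (simp add: distrib_left flip: mult.assoc)
        ultimately show ?thesis by simp
      next
        case False
        show ?thesis unfolding C_def s(2)
        proof (rule anti_aux)
          show "psis a * psis b + psis b * psis a = 0" using R6[OF assms(6) s(1)] .
          show "psi a * psis b + psis b * psi a = 0" using R9[OF assms(6) s(1)] False by blast
        qed
      qed
    next
      case (w b)
      then show ?thesis using Cw[OF w(1)] by (simp only: w(2))
    next
      case (wi b)
      have "omi b * C = C * omi b"
        by (rule inv_comm_aux[OF Cw[OF wi(1)]]) (use R2[OF wi(1) wi(1)] loc[OF wi(1)] in blast)+
      then show ?thesis by (simp only: wi(2))
    qed
  qed
  have "\<forall>x. C * x = x * C" using cen gen by blast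
  then show ?thesis using loc[OF assms(6)] unfolding C_def by blast
qed

end
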